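(* Let $G=\langle x\rangle$ be a finite cyclic group. Then $G$ admits a $2$-PDR of valency $3$ if and only if $o(x)\geq 5$.
   Context: For a group $G$ and an integer $m\geq 2$, write $g_i$ for the element $(g,i)$ of $G\times\mathbb{Z}_m$. Given subsets $T_{i,j}\subseteq G$ for $i,j\in\mathbb{Z}_m$, the $m$-Cayley digraph $\mathrm{Cay}(G,T_{i,j}:i,j\in\mathbb{Z}_m)$ is the digraph with vertex set $G\times\mathbb{Z}_m$ and arc set $\bigcup_{i,j\in\mathbb{Z}_m}\{(g_i,(tg)_j): t\in T_{i,j},\, g\in G\}$. It is called an $m$-partite Cayley digraph if $T_{i,i}=\emptyset$ for all $i\in\mathbb{Z}_m$. A digraph is regular of valency $k$ if every vertex has out-valency $k$ and in-valency $k$. A group $G$ admits an $m$-PDR of valency $k$ if there exists an $m$-partite Cayley digraph $\Gamma$ over $G$ which is regular of valency $k$ and whose full automorphism group $\mathrm{Aut}(\Gamma)$ is isomorphic to $G$. $o(x)$ denotes the order of $x$. *)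

theory Defs
  imports "HOL-Algebra.Algebra"
begin

definition mcay_vertices :: "('a, 'b) monoid_scheme \<Rightarrow> nat \<Rightarrow> ('a \<times> nat) set" where
  "mcay_vertices G m = carrier G \<times> {0..<m}"

definition mcay_arcs :: "('a, 'b) monoid_scheme \<Rightarrow> nat \<Rightarrow> (nat \<Rightarrow> nat \<Rightarrow> 'a set)
    \<Rightarrow> (('a \<times> nat) \<times> ('a \<times> nat)) set" where
  "mcay_arcs G m T = {((g, i), (t \<otimes>\<^bsub>G\<^esub> g, j)) | g i j t.
      i < m \<and> j < m \<and> t \<in> T i j \<and> g \<in> carrier G}"

definition regular_digraph :: "'v set \<Rightarrow> ('v \<times> 'v) set \<Rightarrow> nat \<Rightarrow> bool" where
  "regular_digraph V A k \<longleftrightarrow>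
     (\<forall>u\<in>V. card {v\<in>V. (u, v) \<in> A} = k \<and> card {v\<in>V. (v, u) \<in> A} = k)"

definition digraph_aut :: "'v set \<Rightarrow> ('v \<times> 'v) set \<Rightarrow> ('v \<Rightarrow> 'v) monoid" where
  "digraph_aut V A = (BijGroup V)\<lparr>carrier :=
     {\<sigma> \<in> Bij V. \<forall>u\<in>V. \<forall>v\<in>V. (u, v) \<in> A \<longleftrightarrow> (\<sigma> u, \<sigma> v) \<in> A}\<rparr>"

definition admits_PDR :: "('a, 'b) monoid_scheme \<Rightarrow> nat \<Rightarrow> nat \<Rightarrow> bool" where
  "admits_PDR G m k \<longleftrightarrow>
     (\<exists>T. (\<forall>i<m. \<forall>j<m. T i j \<subseteq> carrier G) \<and> (\<forall>i<m. T i i = {}) \<and>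
          regular_digraph (mcay_vertices G m) (mcay_arcs G m T) k \<and>
          digraph_aut (mcay_vertices G m) (mcay_arcs G m T) \<cong> G)"

end

theory Submission
  imports Defs
begin

definition shf :: "('a,'b) monoid_scheme \<Rightarrow> 'a \<Rightarrow> int \<Rightarrow> 'a \<Rightarrow> 'a" where
  "shf G x k g = x [^]\<^bsub>G\<^esub> k \<otimes>\<^bsub>G\<^esub> g"

definition TT :: "('a,'b) monoid_scheme \<Rightarrow> 'a \<Rightarrow> nat \<Rightarrow> nat \<Rightarrow> 'a set" where
  "TT G x i j = (if i = 0 \<and> j = 1 then {shf G x 0 \<one>\<^bsub>G\<^esub>, shf G x 1 \<one>\<^bsub>G\<^esub>, shf G x 2 \<one>\<^bsub>G\<^esub>}
     else if i = 1 \<and> j = 0 then {shf G x (-1) \<one>\<^bsub>G\<^esub>, shf G x 0 \<one>\<^bsub>G\<^esub>, shf G x 2 \<one>\<^bsub>G\<^esub>} else {})"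

definition rho :: "('a,'b) monoid_scheme \<Rightarrow> nat \<Rightarrow> 'a \<Rightarrow> ('a \<times> nat \<Rightarrow> 'a \<times> nat)" where
  "rho G m h = (\<lambda>v \<in> mcay_vertices G m. (fst v \<otimes>\<^bsub>G\<^esub> h, snd v))"

context group begin

lemma shf_closed [simp]: "x \<in> carrier G \<Longrightarrow> g \<in> carrier G \<Longrightarrow> shf G x k g \<in> carrier G"
  by (simp add: shf_def)

lemma shf_shf [simp]: "x \<in> carrier G \<Longrightarrow> g \<in> carrier G \<Longrightarrow> shf G x k (shf G x j g) = shf G x (k + j) g"
  by (simp add: shf_def int_pow_mult m_assoc)

lemma shf_0 [simp]: "x \<in> carrier G \<Longrightarrow> g \<in> carrier G \<Longrightarrow> shf G x 0 g = g"
  by (simp add: shf_def)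

lemma shf_eq_dvd: assumes "x \<in> carrier G" "g \<in> carrier G"
  shows "shf G x i g = shf G x j g \<longleftrightarrow> int (ord x) dvd (i - j)"
proof -
  have "x [^] i = x [^] (i - j) \<otimes> x [^] j" using assms by (simp flip: int_pow_mult)
  then have "x [^] i = x [^] j \<longleftrightarrow> x [^] (i - j) = \<one>"
  proof -
    have "x [^] i = x [^] j \<longleftrightarrow> x [^] (i - j) \<otimes> x [^] j = \<one> \<otimes> x [^] j"
      using \<open>x [^] i = x [^] (i - j) \<otimes> x [^] j\<close> assms by simp
    also have "\<dots> \<longleftrightarrow> x [^] (i - j) = \<one>"
      using assms by simp
    finally show ?thesis .
  qed
  then show ?thesis using assms by (simp add: shf_def int_pow_eq_id)
qed

lemma shf_eq5 [simp]: assumes "x \<in> carrier G" "g \<in> carrier G" "5 \<le> ord x" "\<bar>i - j\<bar> < 5"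
  shows "shf G x i g = shf G x j g \<longleftrightarrow> i = j"
proof
  assume "shf G x i g = shf G x j g"
  then have d: "int (ord x) dvd (i - j)" using shf_eq_dvd assms by simp
  show "i = j"
  proof (rule ccontr)
    assume "i \<noteq> j"
    then have "\<bar>int (ord x)\<bar> \<le> \<bar>i - j\<bar>" using d
      by (intro dvd_imp_le_int) auto
    with assms show False by simp
  qed
qed simp

lemma shf_eq5' [simp]: assumes "x \<in> carrier G" "g \<in> carrier G" "5 \<le> ord x" "\<bar>i\<bar> < 5"
  shows "shf G x i g = g \<longleftrightarrow> i = 0" "g = shf G x i g \<longleftrightarrow> i = 0"
  using shf_eq5[OF assms(1-3), of i 0] assms by auto

lemma shf_solve: assumes "x \<in> carrier G" "g \<in> carrier G" "h \<in> carrier G"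
  shows "g = shf G x k h \<longleftrightarrow> h = shf G x (-k) g"
  using assms by (auto simp: shf_def int_pow_neg m_assoc[symmetric])


lemma shf_one_mult [simp]: "x \<in> carrier G \<Longrightarrow> g \<in> carrier G \<Longrightarrow> shf G x k \<one> \<otimes> g = shf G x k g"
  by (simp add: shf_def)

lemma arc_gen: "g \<in> carrier G \<Longrightarrow> ((g,i),(h,j)) \<in> mcay_arcs G m T \<longleftrightarrow>
   i < m \<and> j < m \<and> (\<exists>t\<in>T i j. h = t \<otimes> g)"
  by (auto simp: mcay_arcs_def)


lemma aut_carrier: "carrier (digraph_aut V A) = {\<sigma> \<in> Bij V. \<forall>u\<in>V. \<forall>v\<in>V. (u, v) \<in> A \<longleftrightarrow> (\<sigma> u, \<sigma> v) \<in> A}"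
  by (simp add: digraph_aut_def)

lemma rho_aut:
  assumes h: "h \<in> carrier G" and T: "\<forall>i<m. \<forall>j<m. T i j \<subseteq> carrier G"
  shows "rho G m h \<in> carrier (digraph_aut (mcay_vertices G m) (mcay_arcs G m T))"
proof -
  let ?V = "mcay_vertices G m"
  have bij: "bij_betw (rho G m h) ?V ?V"
  proof (rule bij_betw_byWitness[where f' = "rho G m (inv h)"])
    show "\<forall>a\<in>?V. rho G m (inv h) (rho G m h a) = a"
      using h by (auto simp: rho_def mcay_vertices_def m_assoc)
    show "\<forall>a\<in>?V. rho G m h (rho G m (inv h) a) = a"
      using h by (auto simp: rho_def mcay_vertices_def m_assoc)
    show "rho G m h ` ?V \<subseteq> ?V" using h by (auto simp: rho_def mcay_vertices_def)
    show "rho G m (inv h) ` ?V \<subseteq> ?V" using h by (auto simp: rho_def mcay_vertices_def)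
  qed
  have arcs: "(u, v) \<in> mcay_arcs G m T \<longleftrightarrow> (rho G m h u, rho G m h v) \<in> mcay_arcs G m T"
    if u: "u \<in> ?V" and v: "v \<in> ?V" for u v
  proof -
    obtain g i where gi: "u = (g,i)" "g \<in> carrier G" "i < m" using u by (auto simp: mcay_vertices_def)
    obtain k j where kj: "v = (k,j)" "k \<in> carrier G" "j < m" using v by (auto simp: mcay_vertices_def)
    have "(\<exists>t\<in>T i j. k = t \<otimes> g) \<longleftrightarrow> (\<exists>t\<in>T i j. k \<otimes> h = t \<otimes> (g \<otimes> h))"
    proof (intro bex_cong refl)
      fix t assume "t \<in> T i j"
      then have t: "t \<in> carrier G" using T gi kj by auto
      have "k \<otimes> h = t \<otimes> (g \<otimes> h) \<longleftrightarrow> k \<otimes> h = (t \<otimes> g) \<otimes> h" using t gi h by (simp add: m_assoc)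
      also have "\<dots> \<longleftrightarrow> k = t \<otimes> g" using t gi kj h by simp
      finally show "k = t \<otimes> g \<longleftrightarrow> k \<otimes> h = t \<otimes> (g \<otimes> h)" by simp
    qed
    then show ?thesis using gi kj h
      by (simp add: rho_def mcay_vertices_def arc_gen)
  qed
  show ?thesis
    unfolding aut_carrier Bij_def using bij arcs by (auto simp: rho_def)
qed

lemma cyclic_comm:
  assumes fin: "finite (carrier G)" and x: "x \<in> carrier G" and gen: "generate G {x} = carrier G"
    and a: "a \<in> carrier G" and b: "b \<in> carrier G"
  shows "a \<otimes> b = b \<otimes> a"
proof -
  have E: "carrier G = {x [^] k | k. k \<in> (UNIV :: nat set)}"
    using generate_pow_on_finite_carrier[OF fin x] gen by simp
  obtain p q :: nat where "a = x [^] p" "b = x [^] q" using a b unfolding E by auto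
  then show ?thesis using x by (simp add: nat_pow_mult add.commute)
qed


lemma arc_gen2:
  assumes g: "g \<in> carrier G" and k: "k \<in> carrier G" and T: "T i j \<subseteq> carrier G"
  shows "((g,i),(k,j)) \<in> mcay_arcs G m T \<longleftrightarrow> i < m \<and> j < m \<and> k \<otimes> inv g \<in> T i j"
proof -
  have "(\<exists>t\<in>T i j. k = t \<otimes> g) \<longleftrightarrow> k \<otimes> inv g \<in> T i j"
  proof
    assume "\<exists>t\<in>T i j. k = t \<otimes> g"
    then obtain t where t: "t \<in> T i j" "k = t \<otimes> g" by blast
    then have "t \<in> carrier G" using T by auto
    then have "k \<otimes> inv g = t" using t g by (simp add: m_assoc)
    then show "k \<otimes> inv g \<in> T i j" using t by simp
  next
    assume "k \<otimes> inv g \<in> T i j"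
    moreover have "k = (k \<otimes> inv g) \<otimes> g" using g k by (simp add: m_assoc)
    ultimately show "\<exists>t\<in>T i j. k = t \<otimes> g" by blast
  qed
  then show ?thesis using g by (simp add: arc_gen)
qed

lemma mem_lmult_img:
  assumes d: "d \<in> carrier G" and y: "y \<in> carrier G" and S: "S \<subseteq> carrier G"
  shows "y \<in> (\<lambda>t. d \<otimes> t) ` S \<longleftrightarrow> inv d \<otimes> y \<in> S"
proof
  assume "y \<in> (\<lambda>t. d \<otimes> t) ` S"
  then obtain t where "t \<in> S" "y = d \<otimes> t" by blast
  then show "inv d \<otimes> y \<in> S" using d S by (auto simp: m_assoc[symmetric])
next
  assume "inv d \<otimes> y \<in> S"
  moreover have "y = d \<otimes> (inv d \<otimes> y)" using d y by (simp add: m_assoc[symmetric])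
  ultimately show "y \<in> (\<lambda>t. d \<otimes> t) ` S" by blast
qed

lemma exists_d:
  assumes fin: "finite (carrier G)" and S: "S \<subseteq> carrier G" and R: "R \<subseteq> carrier G"
    and cS: "card S = 3" and cR: "card R = 3" and c4: "card (carrier G) \<le> 4"
  shows "\<exists>d\<in>carrier G. R = (\<lambda>t. d \<otimes> t) ` S"
proof -
  have c3: "card (carrier G) \<ge> 3" using card_mono[OF fin S] cS by simp
  have cdS: "card (carrier G - S) = card (carrier G) - 3" using card_Diff_subset[OF finite_subset[OF S fin] S] cS by simp
  have cdR: "card (carrier G - R) = card (carrier G) - 3" using card_Diff_subset[OF finite_subset[OF R fin] R] cR by simp
  show ?thesis
  proof (cases "card (carrier G) = 3")
    case True
    then have "S = carrier G" "R = carrier G" using card_subset_eq[OF fin S] card_subset_eq[OF fin R] cS cR by simp_all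
    then show ?thesis by (intro bexI[of _ \<one>]) (auto simp: image_def)
  next
    case False
    then have "card (carrier G - S) = 1" "card (carrier G - R) = 1" using c3 c4 cdS cdR by auto
    then obtain s0 r0 where s0: "carrier G - S = {s0}" and r0: "carrier G - R = {r0}"
      by (auto simp: card_1_singleton_iff)
    have s0c: "s0 \<in> carrier G" "s0 \<notin> S" and r0c: "r0 \<in> carrier G" "r0 \<notin> R" using s0 r0 by auto
    have SS: "S = carrier G - {s0}" using s0 S by blast
    have RR: "R = carrier G - {r0}" using r0 R by blast
    define d where "d = r0 \<otimes> inv s0"
    have d: "d \<in> carrier G" using s0c r0c by (simp add: d_def)
    have "inv d = s0 \<otimes> inv r0" using s0c r0c by (simp add: d_def inv_mult_group)
    then have ds: "inv d \<otimes> r0 = s0" using s0c r0c by (simp add: m_assoc)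
    have "R = (\<lambda>t. d \<otimes> t) ` S"
    proof (rule Set.set_eqI)
      fix y show "y \<in> R \<longleftrightarrow> y \<in> (\<lambda>t. d \<otimes> t) ` S"
      proof (cases "y \<in> carrier G")
        case True
        have "inv d \<otimes> y = s0 \<longleftrightarrow> y = r0"
        proof
          assume "inv d \<otimes> y = s0"
          then have "inv d \<otimes> y = inv d \<otimes> r0" using ds by simp
          then show "y = r0" using True r0c d by simp
        qed (use ds in simp)
        note eq = this
        have "y \<in> (\<lambda>t. d \<otimes> t) ` S \<longleftrightarrow> inv d \<otimes> y \<in> S" by (rule mem_lmult_img[OF d True S])
        also have "\<dots> \<longleftrightarrow> inv d \<otimes> y \<noteq> s0"
          using d True by (simp add: SS)
        also have "\<dots> \<longleftrightarrow> y \<noteq> r0" using eq by simp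
        also have "\<dots> \<longleftrightarrow> y \<in> R" using True by (simp add: RR)
        finally show ?thesis by simp
      next
        case False
        have "y \<notin> R" using R False by (auto simp: subset_iff)
        moreover have "y \<notin> (\<lambda>t. d \<otimes> t) ` S" using d S False by (auto intro: m_closed)
        ultimately show ?thesis by simp
      qed
    qed
    then show ?thesis using d by blast
  qed
qed

context
  fixes x assumes x: "x \<in> carrier G" and o5: "5 \<le> ord x"
begin

lemma arc_iff:
  assumes "g \<in> carrier G" "h \<in> carrier G"
  shows "((g,i),(h,j)) \<in> mcay_arcs G 2 (TT G x) \<longleftrightarrow>
     (i = 0 \<and> j = 1 \<and> (h = g \<or> h = shf G x 1 g \<or> h = shf G x 2 g)) \<or>
     (i = 1 \<and> j = 0 \<and> (h = shf G x (-1) g \<or> h = g \<or> h = shf G x 2 g))"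
  apply (subst arc_gen[OF assms(1)])
  using assms x apply (simp add: TT_def)

  done

lemma arc_in:
  assumes "g \<in> carrier G" "h \<in> carrier G"
  shows "((h,j),(g,i)) \<in> mcay_arcs G 2 (TT G x) \<longleftrightarrow>
     (j = 0 \<and> i = 1 \<and> (h = g \<or> h = shf G x (-1) g \<or> h = shf G x (-2) g)) \<or>
     (j = 1 \<and> i = 0 \<and> (h = shf G x 1 g \<or> h = g \<or> h = shf G x (-2) g))"
  using assms x by (auto simp: arc_iff shf_solve[of _ g h])


lemma Dg0:
  assumes "g \<in> carrier G" "h \<in> carrier G"
    "((g,0),(h,j)) \<in> mcay_arcs G 2 (TT G x)" "((h,j),(g,0)) \<in> mcay_arcs G 2 (TT G x)"
  shows "(h,j) = (g,1) \<or> (h,j) = (shf G x 1 g, 1)"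
  using assms(3,4) unfolding arc_iff[OF assms(1,2)] arc_in[OF assms(1,2)]
  using x o5 assms(1,2) by auto

lemma Dg1:
  assumes "g \<in> carrier G" "h \<in> carrier G"
    "((g,1),(h,j)) \<in> mcay_arcs G 2 (TT G x)" "((h,j),(g,1)) \<in> mcay_arcs G 2 (TT G x)"
  shows "(h,j) = (g,0) \<or> (h,j) = (shf G x (-1) g, 0)"
  using assms(3,4) unfolding arc_iff[OF assms(1,2)] arc_in[OF assms(1,2)]
  using x o5 assms(1,2) by auto

lemma OW0:
  assumes "g \<in> carrier G" "h \<in> carrier G"
    "((g,0),(h,j)) \<in> mcay_arcs G 2 (TT G x)" "((h,j),(g,0)) \<notin> mcay_arcs G 2 (TT G x)"
  shows "(h,j) = (shf G x 2 g, 1)"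
  using assms(3,4) unfolding arc_iff[OF assms(1,2)] arc_in[OF assms(1,2)]
  using x o5 assms(1,2) by auto

lemma OW1:
  assumes "g \<in> carrier G" "h \<in> carrier G"
    "((g,1),(h,j)) \<in> mcay_arcs G 2 (TT G x)" "((h,j),(g,1)) \<notin> mcay_arcs G 2 (TT G x)"
  shows "(h,j) = (shf G x 2 g, 0)"
  using assms(3,4) unfolding arc_iff[OF assms(1,2)] arc_in[OF assms(1,2)]
  using x o5 assms(1,2) by auto


lemma arcs_pos:
  assumes g: "g \<in> carrier G"
  shows "((g,0),(g,1)) \<in> mcay_arcs G 2 (TT G x)" "((g,1),(g,0)) \<in> mcay_arcs G 2 (TT G x)"
    "((g,0),(shf G x 1 g,1)) \<in> mcay_arcs G 2 (TT G x)"
    "((shf G x 1 g,1),(g,0)) \<in> mcay_arcs G 2 (TT G x)"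
    "((g,0),(shf G x 2 g,1)) \<in> mcay_arcs G 2 (TT G x)"
    "((shf G x 2 g,1),(g,0)) \<notin> mcay_arcs G 2 (TT G x)"
    "((g,1),(shf G x 2 g,0)) \<in> mcay_arcs G 2 (TT G x)"
    "((shf G x 2 g,0),(g,1)) \<notin> mcay_arcs G 2 (TT G x)"
  using g x o5 by (simp_all add: arc_iff)

lemma aut_props:
  assumes "\<sigma> \<in> carrier (digraph_aut (mcay_vertices G 2) (mcay_arcs G 2 (TT G x)))"
  shows "\<And>u v. u \<in> mcay_vertices G 2 \<Longrightarrow> v \<in> mcay_vertices G 2 \<Longrightarrow>
           (u, v) \<in> mcay_arcs G 2 (TT G x) \<longleftrightarrow> (\<sigma> u, \<sigma> v) \<in> mcay_arcs G 2 (TT G x)"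
    and "\<And>u. u \<in> mcay_vertices G 2 \<Longrightarrow> \<sigma> u \<in> mcay_vertices G 2"
    and "inj_on \<sigma> (mcay_vertices G 2)"
    and "\<sigma> \<in> extensional (mcay_vertices G 2)"
  using assms by (auto simp: digraph_aut_def Bij_def bij_betw_def)

lemma vert_split:
  assumes "v \<in> mcay_vertices G 2"
  obtains a where "a \<in> carrier G" "v = (a,0)" | a where "a \<in> carrier G" "v = (a,1)"
  using assms by (cases v) (auto simp: mcay_vertices_def less_2_cases_iff)


abbreviation "AA \<equiv> mcay_arcs G 2 (TT G x)"
abbreviation "VV \<equiv> mcay_vertices G 2"

lemma VI: "a \<in> carrier G \<Longrightarrow> i < 2 \<Longrightarrow> (a,i) \<in> VV"
  by (simp add: mcay_vertices_def)

lemma img_obtain: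
  assumes aut: "\<sigma> \<in> carrier (digraph_aut VV AA)" and a: "a \<in> carrier G" and i: "i < 2"
  obtains b j where "\<sigma> (a,i) = (b,j)" "b \<in> carrier G" "j < 2"
  using aut_props(2)[OF aut VI[OF a i]] by (cases "\<sigma> (a,i)") (auto simp: mcay_vertices_def)

lemma prop_step:
  assumes aut: "\<sigma> \<in> carrier (digraph_aut VV AA)" and g: "g \<in> carrier G" and g': "g' \<in> carrier G"
    and e0: "\<sigma> (g,0) = (g',0)"
  shows "\<sigma> (g,1) = (g',1) \<and> \<sigma> (shf G x 1 g, 0) = (shf G x 1 g', 0)"
proof -
  note P = aut_props[OF aut]
  have sg: "shf G x 1 g \<in> carrier G" "shf G x 2 g \<in> carrier G" "shf G x 1 g' \<in> carrier G"
    "shf G x 2 g' \<in> carrier G" using g g' x by auto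
  have pres: "(\<sigma> u, \<sigma> v) \<in> AA \<longleftrightarrow> (u, v) \<in> AA" if "u \<in> VV" "v \<in> VV" for u v
    using P(1)[OF that] by simp
  obtain h1 j1 where h1: "\<sigma> (g,1) = (h1,j1)" "h1 \<in> carrier G" "j1 < 2"
    using img_obtain[OF aut g, of 1] by auto
  have a1: "((g',0),(h1,j1)) \<in> AA" "((h1,j1),(g',0)) \<in> AA"
    using pres[OF VI[OF g] VI[OF g], of 0 1] pres[OF VI[OF g] VI[OF g], of 1 0] arcs_pos(1,2)[OF g]
      e0 h1 by auto
  have c1: "(h1,j1) = (g',1) \<or> (h1,j1) = (shf G x 1 g',1)" using Dg0[OF g' h1(2) a1] .
  obtain w1 wj where w: "\<sigma> (shf G x 2 g,1) = (w1,wj)" "w1 \<in> carrier G" "wj < 2"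
    using img_obtain[OF aut sg(2), of 1] by auto
  have "((g',0),(w1,wj)) \<in> AA" "((w1,wj),(g',0)) \<notin> AA"
    using pres[OF VI[OF g] VI[OF sg(2)], of 0 1] pres[OF VI[OF sg(2)] VI[OF g], of 1 0]
      arcs_pos(5,6)[OF g] e0 w by auto
  then have w': "(w1,wj) = (shf G x 2 g',1)" using OW0[OF g' w(2)] by blast
  obtain z1 zj where z: "\<sigma> (shf G x 2 g,0) = (z1,zj)" "z1 \<in> carrier G" "zj < 2"
    using img_obtain[OF aut sg(2), of 0] by auto
  have za: "((h1,j1),(z1,zj)) \<in> AA" "((z1,zj),(h1,j1)) \<notin> AA"
    using pres[OF VI[OF g] VI[OF sg(2)], of 1 0] pres[OF VI[OF sg(2)] VI[OF g], of 0 1]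
      arcs_pos(7,8)[OF g] h1 z by auto
  have zb: "((z1,zj),(shf G x 2 g',1)) \<in> AA" "((shf G x 2 g',1),(z1,zj)) \<in> AA"
    using pres[OF VI[OF sg(2)] VI[OF sg(2)], of 0 1] pres[OF VI[OF sg(2)] VI[OF sg(2)], of 1 0]
      arcs_pos(1,2)[OF sg(2)] w w' z by auto
  have first: "\<sigma> (g,1) = (g',1)"
  proof (rule ccontr)
    assume "\<sigma> (g,1) \<noteq> (g',1)"
    then have hh: "h1 = shf G x 1 g'" "j1 = 1" using c1 h1 by auto
    then have "(z1,zj) = (shf G x 2 (shf G x 1 g'), 0)" using OW1[OF sg(3) z(2)] za by simp
    then have zz: "zj = 0" "z1 = shf G x 3 g'" using x g' by auto
    have "((z1,0),(shf G x 2 g',1)) \<in> AA" "((shf G x 2 g',1),(z1,0)) \<in> AA" using zb zz by auto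
    then have "(shf G x 2 g', 1) = (z1,1) \<or> (shf G x 2 g', 1) = (shf G x 1 z1, 1)"
      using Dg0[OF z(2) sg(4)] by blast
    then show False using x o5 g' zz by auto
  qed
  obtain y1 yj where y: "\<sigma> (shf G x 1 g,1) = (y1,yj)" "y1 \<in> carrier G" "yj < 2"
    using img_obtain[OF aut sg(1), of 1] by auto
  have "((g',0),(y1,yj)) \<in> AA" "((y1,yj),(g',0)) \<in> AA"
    using pres[OF VI[OF g] VI[OF sg(1)], of 0 1] pres[OF VI[OF sg(1)] VI[OF g], of 1 0]
      arcs_pos(3,4)[OF g] e0 y by auto
  then have cy: "(y1,yj) = (g',1) \<or> (y1,yj) = (shf G x 1 g',1)" using Dg0[OF g' y(2)] by blast
  have "(y1,yj) \<noteq> (g',1)"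
  proof
    assume "(y1,yj) = (g',1)"
    then have "\<sigma> (shf G x 1 g,1) = \<sigma> (g,1)" using first y by simp
    then have "shf G x 1 g = g" using inj_onD[OF P(3) _ VI[OF sg(1)] VI[OF g]] by auto
    then show False using x o5 g by simp
  qed
  then have yy: "\<sigma> (shf G x 1 g,1) = (shf G x 1 g',1)" using cy y by auto
  obtain q1 qj where q: "\<sigma> (shf G x 1 g,0) = (q1,qj)" "q1 \<in> carrier G" "qj < 2"
    using img_obtain[OF aut sg(1), of 0] by auto
  have "((shf G x 1 g',1),(q1,qj)) \<in> AA" "((q1,qj),(shf G x 1 g',1)) \<in> AA"
    using pres[OF VI[OF sg(1)] VI[OF sg(1)], of 1 0] pres[OF VI[OF sg(1)] VI[OF sg(1)], of 0 1]
      arcs_pos(1,2)[OF sg(1)] yy q by auto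
  then have cq: "(q1,qj) = (shf G x 1 g',0) \<or> (q1,qj) = (g',0)"
    using Dg1[OF sg(3) q(2)] x g' by simp
  have "(q1,qj) \<noteq> (g',0)"
  proof
    assume "(q1,qj) = (g',0)"
    then have "\<sigma> (shf G x 1 g,0) = \<sigma> (g,0)" using e0 q by simp
    then have "shf G x 1 g = g" using inj_onD[OF P(3) _ VI[OF sg(1)] VI[OF g]] by auto
    then show False using x o5 g by simp
  qed
  then show ?thesis using first cq q by auto
qed


lemma part0:
  assumes aut: "\<sigma> \<in> carrier (digraph_aut VV AA)" and g: "g \<in> carrier G"
  obtains g' where "g' \<in> carrier G" "\<sigma> (g,0) = (g',0)"
proof -
  note P = aut_props[OF aut]
  have sg: "shf G x 1 g \<in> carrier G" "shf G x 2 g \<in> carrier G" using g x by auto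
  have pres: "(\<sigma> u, \<sigma> v) \<in> AA \<longleftrightarrow> (u, v) \<in> AA" if "u \<in> VV" "v \<in> VV" for u v
    using P(1)[OF that] by simp
  obtain a k where a: "\<sigma> (g,0) = (a,k)" "a \<in> carrier G" "k < 2"
    using img_obtain[OF aut g, of 0] by auto
  have "k \<noteq> 1"
  proof
    assume k: "k = 1"
    obtain b1 k1 where b1: "\<sigma> (shf G x 1 g,1) = (b1,k1)" "b1 \<in> carrier G" "k1 < 2"
      using img_obtain[OF aut sg(1), of 1] by auto
    obtain b2 k2 where b2: "\<sigma> (shf G x 1 g,0) = (b2,k2)" "b2 \<in> carrier G" "k2 < 2"
      using img_obtain[OF aut sg(1), of 0] by auto
    obtain b3 k3 where b3: "\<sigma> (shf G x 2 g,1) = (b3,k3)" "b3 \<in> carrier G" "k3 < 2"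
      using img_obtain[OF aut sg(2), of 1] by auto
    have "((a,1),(b1,k1)) \<in> AA" "((b1,k1),(a,1)) \<in> AA"
      using pres[OF VI[OF g] VI[OF sg(1)], of 0 1] pres[OF VI[OF sg(1)] VI[OF g], of 1 0]
        arcs_pos(3,4)[OF g] a b1 k by auto
    then have c1: "(b1,k1) = (a,0) \<or> (b1,k1) = (shf G x (-1) a,0)" using Dg1[OF a(2) b1(2)] by blast
    have "((b1,k1),(b2,k2)) \<in> AA" "((b2,k2),(b1,k1)) \<in> AA"
      using pres[OF VI[OF sg(1)] VI[OF sg(1)], of 1 0] pres[OF VI[OF sg(1)] VI[OF sg(1)], of 0 1]
        arcs_pos(1,2)[OF sg(1)] b1 b2 by auto
    then have c2: "(b2,k2) = (b1,1) \<or> (b2,k2) = (shf G x 1 b1,1)"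
      using Dg0[OF b1(2) b2(2)] c1 by auto
    have e: "shf G x 1 (shf G x 1 g) = shf G x 2 g" using x g by simp
    have "((b2,k2),(b3,k3)) \<in> AA" "((b3,k3),(b2,k2)) \<in> AA"
      using pres[OF VI[OF sg(1)] VI[OF sg(2)], of 0 1] pres[OF VI[OF sg(2)] VI[OF sg(1)], of 1 0]
        arcs_pos(3,4)[OF sg(1)] b2 b3 e by auto
    then have c3: "(b3,k3) = (b2,0) \<or> (b3,k3) = (shf G x (-1) b2,0)"
      using Dg1[OF b2(2) b3(2)] c2 by auto
    have "((a,1),(b3,k3)) \<in> AA" "((b3,k3),(a,1)) \<notin> AA"
      using pres[OF VI[OF g] VI[OF sg(2)], of 0 1] pres[OF VI[OF sg(2)] VI[OF g], of 1 0]
        arcs_pos(5,6)[OF g] a b3 k by auto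
    then have c4: "b3 = shf G x 2 a" using OW1[OF a(2) b3(2)] by blast
    show False using c1 c2 c3 c4 x o5 a(2) by auto
  qed
  then show ?thesis using that a by (auto simp: less_2_cases_iff)
qed


lemma aut_trans:
  assumes fin: "finite (carrier G)" and gen: "generate G {x} = carrier G"
    and aut: "\<sigma> \<in> carrier (digraph_aut VV AA)"
  shows "\<exists>h\<in>carrier G. \<sigma> = rho G 2 h"
proof -
  obtain h where h: "h \<in> carrier G" "\<sigma> (\<one>,0) = (h,0)" using part0[OF aut one_closed] by metis
  have ind: "\<sigma> (shf G x (int n) \<one>, 0) = (shf G x (int n) h, 0)" for n
  proof (induction n)
    case 0 then show ?case using h x by simp
  next
    case (Suc n)
    have "\<sigma> (shf G x 1 (shf G x (int n) \<one>), 0) = (shf G x 1 (shf G x (int n) h), 0)"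
      using prop_step[OF aut _ _ Suc.IH] x h by auto
    then show ?case using x h by (simp add: add.commute)
  qed
  have E: "carrier G = {x [^] k | k. k \<in> (UNIV :: nat set)}"
    using generate_pow_on_finite_carrier[OF fin x] gen by simp
  have main: "\<sigma> (g,i) = (g \<otimes> h, i)" if g: "g \<in> carrier G" and i: "i < 2" for g i
  proof -
    obtain n :: nat where n: "g = x [^] n" using g unfolding E by auto
    have "shf G x (int n) \<one> = g" "shf G x (int n) h = g \<otimes> h"
      using n x by (simp_all add: shf_def int_pow_int)
    then have e0: "\<sigma> (g,0) = (g \<otimes> h, 0)" using ind[of n] by simp
    show ?thesis
    proof (cases "i = 0")
      case True then show ?thesis using e0 by simp
    next
      case False then have "i = 1" using i by simp
      then show ?thesis using prop_step[OF aut g _ e0] g h by auto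
    qed
  qed
  have "\<sigma> = rho G 2 h"
  proof
    fix v show "\<sigma> v = rho G 2 h v"
    proof (cases "v \<in> VV")
      case True
      then obtain g i where "v = (g,i)" "g \<in> carrier G" "i < 2" by (auto simp: mcay_vertices_def)
      then show ?thesis using main True by (simp add: rho_def)
    next
      case False
      have "\<sigma> v = undefined" using aut_props(4)[OF aut] False by (rule extensional_arb)
      then show ?thesis using False by (simp add: rho_def)
    qed
  qed
  then show ?thesis using h by blast
qed


lemma nbr_sets:
  assumes g: "g \<in> carrier G"
  shows "{v \<in> VV. ((g,0),v) \<in> AA} = {(g,1),(shf G x 1 g,1),(shf G x 2 g,1)}"
    "{v \<in> VV. (v,(g,0)) \<in> AA} = {(g,1),(shf G x 1 g,1),(shf G x (-2) g,1)}"
    "{v \<in> VV. ((g,1),v) \<in> AA} = {(g,0),(shf G x (-1) g,0),(shf G x 2 g,0)}"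
    "{v \<in> VV. (v,(g,1)) \<in> AA} = {(g,0),(shf G x (-1) g,0),(shf G x (-2) g,0)}"
  using g x by (auto simp: mcay_vertices_def arc_iff arc_in)

lemma regular_TT: "regular_digraph VV AA 3"
  unfolding regular_digraph_def
proof
  fix u assume "u \<in> VV"
  then show "card {v \<in> VV. (u, v) \<in> AA} = 3 \<and> card {v \<in> VV. (v, u) \<in> AA} = 3"
  proof (cases rule: vert_split)
    case (1 a) then show ?thesis unfolding 1(2) nbr_sets[OF 1(1)] using x o5 by simp
  next
    case (2 a) then show ?thesis unfolding 2(2) nbr_sets[OF 2(1)] using x o5 by simp
  qed
qed


lemma TT_sub: "\<forall>i<2. \<forall>j<2. TT G x i j \<subseteq> carrier G"
  using x by (auto simp: TT_def)

lemma forward: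
  assumes fin: "finite (carrier G)" and gen: "generate G {x} = carrier G"
  shows "admits_PDR G 2 3"
proof -
  let ?Aut = "digraph_aut VV AA"
  have inBij: "rho G 2 a \<in> Bij VV" if "a \<in> carrier G" for a
    using rho_aut[OF that TT_sub] by (simp add: aut_carrier)
  have hom: "rho G 2 \<in> hom G ?Aut"
  proof (rule homI)
    fix a assume "a \<in> carrier G" then show "rho G 2 a \<in> carrier ?Aut" using rho_aut[OF _ TT_sub] by blast
  next
    fix a b assume a: "a \<in> carrier G" and b: "b \<in> carrier G"
    have "rho G 2 a \<otimes>\<^bsub>?Aut\<^esub> rho G 2 b = compose VV (rho G 2 a) (rho G 2 b)"
      using inBij[OF a] inBij[OF b] by (simp add: digraph_aut_def BijGroup_def)
    also have "\<dots> = rho G 2 (a \<otimes> b)"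
    proof
      fix v show "compose VV (rho G 2 a) (rho G 2 b) v = rho G 2 (a \<otimes> b) v"
        using a b cyclic_comm[OF fin x gen a b]
        by (cases "v \<in> VV") (auto simp: compose_def rho_def mcay_vertices_def m_assoc)
    qed
    finally show "rho G 2 (a \<otimes> b) = rho G 2 a \<otimes>\<^bsub>?Aut\<^esub> rho G 2 b" by simp
  qed
  have inj: "inj_on (rho G 2) (carrier G)"
  proof (rule inj_onI)
    fix a b assume a: "a \<in> carrier G" and b: "b \<in> carrier G" and e: "rho G 2 a = rho G 2 b"
    have "rho G 2 a (\<one>,0) = rho G 2 b (\<one>,0)" using e by simp
    then show "a = b" using a b by (simp add: rho_def mcay_vertices_def)
  qed
  have img: "rho G 2 ` carrier G = carrier ?Aut"
  proof
    show "rho G 2 ` carrier G \<subseteq> carrier ?Aut" using rho_aut[OF _ TT_sub] by blast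
    show "carrier ?Aut \<subseteq> rho G 2 ` carrier G" using aut_trans[OF fin gen] by blast
  qed
  have "rho G 2 \<in> iso G ?Aut" using hom inj img by (simp add: iso_def bij_betw_def)
  then have "G \<cong> ?Aut" by (rule is_isoI)
  then have "?Aut \<cong> G" by (rule iso_sym)
  moreover have "\<forall>i<2. TT G x i i = {}" by (auto simp: TT_def less_2_cases_iff)
  ultimately show ?thesis unfolding admits_PDR_def using TT_sub regular_TT by blast
qed

end

lemma backward:
  assumes fin: "finite (carrier G)" and x: "x \<in> carrier G" and gen: "generate G {x} = carrier G"
    and adm: "admits_PDR G 2 3"
  shows "5 \<le> ord x"
proof (rule ccontr)
  assume "\<not> 5 \<le> ord x"
  moreover have "ord x = card (carrier G)" using generate_pow_card[OF x] gen by simp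
  ultimately have c4: "card (carrier G) \<le> 4" by simp
  obtain T where T: "\<forall>i<2. \<forall>j<2. T i j \<subseteq> carrier G" and Tii: "\<forall>i<2. T i i = {}"
    and reg: "regular_digraph (mcay_vertices G 2) (mcay_arcs G 2 T) 3"
    and iso: "digraph_aut (mcay_vertices G 2) (mcay_arcs G 2 T) \<cong> G"
    using adm unfolding admits_PDR_def by blast
  define V where "V = mcay_vertices G 2"
  define A where "A = mcay_arcs G 2 T"
  have S: "T 0 1 \<subseteq> carrier G" "T 1 0 \<subseteq> carrier G" "T 0 0 = {}" "T 1 1 = {}"
    using T Tii by auto
  have Tc: "T i j \<subseteq> carrier G" if "i < 2" "j < 2" for i j using T that by auto
  have vs: "\<exists>g. g \<in> carrier G \<and> (v = (g,0) \<or> v = (g,1))" if "v \<in> V" for v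
    using that by (cases v) (auto simp: V_def mcay_vertices_def less_2_cases_iff)
  have out0: "{v \<in> V. ((\<one>,0),v) \<in> A} = (\<lambda>t. (t,1::nat)) ` T 0 1"
  proof (rule Set.set_eqI)
    fix v
    show "v \<in> {v \<in> V. ((\<one>,0),v) \<in> A} \<longleftrightarrow> v \<in> (\<lambda>t. (t,1::nat)) ` T 0 1"
    proof
      assume "v \<in> {v \<in> V. ((\<one>,0),v) \<in> A}"
      then have v: "v \<in> V" "((\<one>,0),v) \<in> A" by auto
      then obtain g where g: "g \<in> carrier G" "v = (g,0) \<or> v = (g,1)" using vs by blast
      then show "v \<in> (\<lambda>t. (t,1::nat)) ` T 0 1"
        using v(2) S unfolding A_def by (auto simp: arc_gen2)
    next
      assume "v \<in> (\<lambda>t. (t,1::nat)) ` T 0 1"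
      then obtain t where t: "t \<in> T 0 1" "v = (t,1)" by blast
      then have "t \<in> carrier G" using S by auto
      then show "v \<in> {v \<in> V. ((\<one>,0),v) \<in> A}"
        using t S unfolding A_def V_def by (auto simp: arc_gen2 mcay_vertices_def)
    qed
  qed
  have out1: "{v \<in> V. ((\<one>,1),v) \<in> A} = (\<lambda>t. (t,0::nat)) ` T 1 0"
  proof (rule Set.set_eqI)
    fix v
    show "v \<in> {v \<in> V. ((\<one>,1),v) \<in> A} \<longleftrightarrow> v \<in> (\<lambda>t. (t,0::nat)) ` T 1 0"
    proof
      assume "v \<in> {v \<in> V. ((\<one>,1),v) \<in> A}"
      then have v: "v \<in> V" "((\<one>,1),v) \<in> A" by auto
      then obtain g where g: "g \<in> carrier G" "v = (g,0) \<or> v = (g,1)" using vs by blast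
      then show "v \<in> (\<lambda>t. (t,0::nat)) ` T 1 0"
        using v(2) S unfolding A_def by (auto simp: arc_gen2)
    next
      assume "v \<in> (\<lambda>t. (t,0::nat)) ` T 1 0"
      then obtain t where t: "t \<in> T 1 0" "v = (t,0)" by blast
      then have "t \<in> carrier G" using S by auto
      then show "v \<in> {v \<in> V. ((\<one>,1),v) \<in> A}"
        using t S unfolding A_def V_def by (auto simp: arc_gen2 mcay_vertices_def)
    qed
  qed
  have "(\<one>,0) \<in> V" "(\<one>,1) \<in> V" by (auto simp: V_def mcay_vertices_def)
  then have "card {v \<in> V. ((\<one>,0),v) \<in> A} = 3" "card {v \<in> V. ((\<one>,1),v) \<in> A} = 3"
    using reg unfolding regular_digraph_def V_def A_def by blast+
  then have cS: "card (T 0 1) = 3" "card (T 1 0) = 3"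
    unfolding out0 out1 by (simp_all add: card_image inj_on_def)
  obtain d where d: "d \<in> carrier G" and R: "T 1 0 = (\<lambda>t. d \<otimes> t) ` T 0 1"
    using exists_d[OF fin S(1,2) cS c4] by blast
  interpret C: comm_group G
    by (rule group_comm_groupI) (rule cyclic_comm[OF fin x gen])
  define sw where "sw = (\<lambda>v\<in>V. if snd v = 0 then (fst v, 1::nat) else (d \<otimes> fst v, 0))"
  define sw' where "sw' = (\<lambda>v\<in>V. if snd v = 0 then (inv d \<otimes> fst v, 1::nat) else (fst v, 0))"
  have swv: "sw (g,0) = (g,1)" "sw (g,1) = (d \<otimes> g, 0)" if "g \<in> carrier G" for g
    using that by (auto simp: sw_def V_def mcay_vertices_def)
  have swv': "sw (g, Suc 0) = (d \<otimes> g, 0)" if "g \<in> carrier G" for g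
    using swv(2)[OF that] by simp
  have bij: "bij_betw sw V V"
  proof (rule bij_betw_byWitness[where f' = sw'])
    show "\<forall>a\<in>V. sw' (sw a) = a"
      using d by (auto simp: sw_def sw'_def V_def mcay_vertices_def less_2_cases_iff m_assoc[symmetric])
    show "\<forall>a\<in>V. sw (sw' a) = a"
      using d by (auto simp: sw_def sw'_def V_def mcay_vertices_def less_2_cases_iff m_assoc[symmetric])
    show "sw ` V \<subseteq> V" using d by (auto simp: sw_def V_def mcay_vertices_def)
    show "sw' ` V \<subseteq> V" using d by (auto simp: sw'_def V_def mcay_vertices_def)
  qed
  have arcs: "(u, v) \<in> A \<longleftrightarrow> (sw u, sw v) \<in> A" if u: "u \<in> V" and v: "v \<in> V" for u v
  proof -
    obtain g where g: "g \<in> carrier G" "u = (g,0) \<or> u = (g,1)" using vs u by blast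
    obtain k where k: "k \<in> carrier G" "v = (k,0) \<or> v = (k,1)" using vs v by blast
    have e1: "inv d \<otimes> (d \<otimes> k \<otimes> inv g) = k \<otimes> inv g" using d g k by (simp add: m_assoc[symmetric])
    have e2: "k \<otimes> inv (d \<otimes> g) = inv d \<otimes> (k \<otimes> inv g)" using d g k by (simp add: C.inv_mult C.m_ac)
    have R': "y \<in> T 1 0 \<longleftrightarrow> inv d \<otimes> y \<in> T 0 1" if "y \<in> carrier G" for y
      unfolding R using mem_lmult_img[OF d that S(1)] .
    show ?thesis
      using g(2) k(2)
    proof (elim disjE)
      assume "u = (g,0)" "v = (k,0)"
      then show ?thesis using g k d S unfolding A_def by (simp add: swv swv' arc_gen2)
    next
      assume "u = (g,0)" "v = (k,1)"
      then show ?thesis using g k d S R'[of "d \<otimes> k \<otimes> inv g"] e1 unfolding A_def by (simp add: swv swv' arc_gen2)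
    next
      assume "u = (g,1)" "v = (k,0)"
      then show ?thesis using g k d S R'[of "k \<otimes> inv g"] e2 unfolding A_def by (simp add: swv swv' arc_gen2)
    next
      assume "u = (g,1)" "v = (k,1)"
      then show ?thesis using g k d S unfolding A_def by (simp add: swv swv' arc_gen2)
    qed
  qed
  have sw_aut: "sw \<in> carrier (digraph_aut V A)"
    unfolding aut_carrier Bij_def using bij arcs by (auto simp: sw_def)
  have rho_in: "rho G 2 ` carrier G \<subseteq> carrier (digraph_aut V A)"
    using rho_aut[OF _ T] unfolding V_def A_def by blast
  have sw_notin: "sw \<notin> rho G 2 ` carrier G"
  proof
    assume "sw \<in> rho G 2 ` carrier G"
    then obtain h where h: "h \<in> carrier G" "sw = rho G 2 h" by blast
    then have "sw (\<one>,0) = rho G 2 h (\<one>,0)" by simp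
    then show False using h swv[of \<one>] by (simp add: rho_def mcay_vertices_def)
  qed
  have injr: "inj_on (rho G 2) (carrier G)"
  proof (rule inj_onI)
    fix a b assume a: "a \<in> carrier G" and b: "b \<in> carrier G" and e: "rho G 2 a = rho G 2 b"
    have "rho G 2 a (\<one>,0) = rho G 2 b (\<one>,0)" using e by simp
    then show "a = b" using a b by (simp add: rho_def mcay_vertices_def)
  qed
  have finV: "finite V" using fin by (simp add: V_def mcay_vertices_def)
  have "carrier (digraph_aut V A) \<subseteq> V \<rightarrow>\<^sub>E V"
    by (auto simp: aut_carrier Bij_def PiE_def bij_betw_def)
  then have finA: "finite (carrier (digraph_aut V A))"
    using finite_PiE[OF finV, of "\<lambda>_. V"] finV by (blast intro: finite_subset)
  have "card (insert sw (rho G 2 ` carrier G)) = card (carrier G) + 1"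
    using sw_notin card_image[OF injr] fin by simp
  moreover have "card (insert sw (rho G 2 ` carrier G)) \<le> card (carrier (digraph_aut V A))"
    using sw_aut rho_in finA by (intro card_mono) auto
  moreover have "card (carrier (digraph_aut V A)) = card (carrier G)"
    using iso_same_card[OF iso] unfolding V_def A_def .
  ultimately show False by simp
qed

end

theorem lemma3p2:
  fixes G (structure) and x
  assumes "group G" and "finite (carrier G)"
    and "x \<in> carrier G" and "generate G {x} = carrier G"
  shows "admits_PDR G 2 3 \<longleftrightarrow> group.ord G x \<ge> 5"
proof -
  interpret group G by fact
  have "5 \<le> ord x \<Longrightarrow> admits_PDR G 2 3" using forward assms(2,3,4) by blast
  moreover have "admits_PDR G 2 3 \<Longrightarrow> 5 \<le> ord x" using backward assms(2,3,4) by blast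
  ultimately show ?thesis by blast
qed

end
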